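(* Let $\mu$ be a partition of $n+k$ with $h$ rows and $l=\mu_1$ columns, and let $(i,j)$ be a cell of $\mu$. Let $\alpha_0,\dots,\alpha_{h-1}$ be distinct rational numbers and $\beta_0,\dots,\beta_{l-1}$ be distinct rational numbers. Let $\mathcal{T}$ be the set of fillings of the Ferrers diagram of $\mu$ in which $k$ cells of $S_\mu(i,j)$ are left white and the other $n$ cells contain the numbers $1,\dots,n$, each exactly once. To $T\in\mathcal{T}$ associate the point $(a(T),b(T))\in\mathbb{Q}^{2n}$ with $a_t(T)=\alpha_{r_t}$ and $b_t(T)=\beta_{c_t}$, where $(r_t,c_t)$ is the cell (row, column) containing $t$. Let $\rho^k$ be the set of these points, and $J_{\rho^k}\subseteq\mathbb{Q}[X_n,Y_n]$ the ideal of polynomials vanishing on $\rho^k$. Let $I^k=\mathrm{gr}\,J_{\rho^k}$ be the ideal generated by the highest-degree homogeneous components of elements of $J_{\rho^k}$. Then $$I^k\subseteq \bigcap_{(a_1,b_1),\dots,(a_k,b_k)} I_{\partial x_{n+1}^{a_1}\partial y_{n+1}^{b_1}\cdots\partial x_{n+k}^{a_k}\partial y_{n+k}^{b_k}\Delta_\mu}\ \cap\ \mathbb{Q}[X_n,Y_n],$$ where the intersection runs over all $k$-tuples of distinct cells of $S_\mu(i,j)$ in increasing order, and $\Delta_\mu=\Delta_\mu(X_{n+k},Y_{n+k})$.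
   Context: Write $X_m=(x_1,\dots,x_m)$ and $Y_m=(y_1,\dots,y_m)$. The Ferrers diagram of $\mu$ is $\{(a,b):0\le a\le h-1,\ 0\le b\le\mu_{a+1}-1\}$ ($a$ = row, $b$ = column). Cells are ordered by $(p,q)<(p',q')$ iff $q<q'$, or $q=q'$ and $p<p'$. For a lattice diagram with cells $(p_1,q_1)<\dots<(p_m,q_m)$, set $\Delta_L=\det(x_r^{p_t}y_r^{q_t})_{1\le r,t\le m}$. The shadow is $S_\mu(i,j)=\{(a,b)\in\mu:a\ge i,\ b\ge j\}$. For $R\in\mathbb{Q}[X_{n+k},Y_{n+k}]$, $I_R$ is the set of $P$ such that $P(\partial)Q=0$ for all partial derivatives $Q$ of $R$, where $P(\partial)$ substitutes $\partial/\partial x_r$ and $\partial/\partial y_r$ for $x_r$ and $y_r$. *)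

theory Defs
  imports Complex_Main "HOL-Library.Poly_Mapping" "HOL-Combinatorics.Permutations"
begin

datatype pvar = X nat | Y nat

type_synonym mon = "pvar \<Rightarrow>\<^sub>0 nat"
type_synonym qpoly = "(pvar \<Rightarrow>\<^sub>0 nat) \<Rightarrow>\<^sub>0 rat"

definition monom :: "mon \<Rightarrow> qpoly" where
  "monom m = Poly_Mapping.single m 1"

definition const :: "rat \<Rightarrow> qpoly" where
  "const c = Poly_Mapping.single 0 c"

definition in_QXY :: "nat \<Rightarrow> qpoly \<Rightarrow> bool" where
  "in_QXY n p \<longleftrightarrow> (\<forall>m::mon. m \<in> Poly_Mapping.keys p \<longrightarrow> (\<forall>v::pvar. v \<in> Poly_Mapping.keys m \<longrightarrow> (\<exists>t. 1 \<le> t \<and> t \<le> n \<and> (v = X t \<or> v = Y t))))"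

definition eval :: "qpoly \<Rightarrow> (pvar \<Rightarrow> rat) \<Rightarrow> rat" where
  "eval p pt = (\<Sum>m\<in>Poly_Mapping.keys p. Poly_Mapping.lookup p m * (\<Prod>v\<in>Poly_Mapping.keys m. pt v ^ Poly_Mapping.lookup m v))"

definition mdeg :: "mon \<Rightarrow> nat" where
  "mdeg m = (\<Sum>v\<in>Poly_Mapping.keys m. Poly_Mapping.lookup m v)"

definition totdeg :: "qpoly \<Rightarrow> nat" where
  "totdeg p = Max (mdeg ` Poly_Mapping.keys p)"

definition top_form :: "qpoly \<Rightarrow> qpoly" where
  "top_form p = Abs_poly_mapping (\<lambda>m. if mdeg m = totdeg p then Poly_Mapping.lookup p m else 0)"

definition ideal_gen :: "qpoly set \<Rightarrow> qpoly set \<Rightarrow> qpoly set" where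
  "ideal_gen S G = {p. \<exists>F c. finite F \<and> F \<subseteq> G \<and> (\<forall>g\<in>F. c g \<in> S) \<and> p = (\<Sum>g\<in>F. c g * g)}"

text \<open>the partial derivative operator corresponding to the monomial m, applied to Q:
  d^m (x^(m'+m)) = prod_v (m'_v + m_v)!/m'_v! x^m'\<close>
definition diff_mono :: "mon \<Rightarrow> qpoly \<Rightarrow> qpoly" where
  "diff_mono m Q = Abs_poly_mapping (\<lambda>m'.
     (\<Prod>v\<in>Poly_Mapping.keys m. (fact (Poly_Mapping.lookup m' v + Poly_Mapping.lookup m v) :: rat) / fact (Poly_Mapping.lookup m' v)) * Poly_Mapping.lookup Q (m' + m))"

definition apply_op :: "qpoly \<Rightarrow> qpoly \<Rightarrow> qpoly" where
  "apply_op P Q = (\<Sum>m\<in>Poly_Mapping.keys P. const (Poly_Mapping.lookup P m) * diff_mono m Q)"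

definition I_of :: "qpoly \<Rightarrow> qpoly set" where
  "I_of R = {P. \<forall>m. apply_op P (diff_mono m R) = 0}"

definition is_partition :: "nat list \<Rightarrow> nat \<Rightarrow> bool" where
  "is_partition mu N \<longleftrightarrow> sorted_wrt (\<ge>) mu \<and> (\<forall>p\<in>set mu. p > 0) \<and> sum_list mu = N"

text \<open>Ferrers diagram: cells (a,b), a = row, b = column\<close>
definition ferrers :: "nat list \<Rightarrow> (nat \<times> nat) set" where
  "ferrers mu = {(a, b). a < length mu \<and> b < mu ! a}"

definition shadow :: "nat list \<Rightarrow> nat \<Rightarrow> nat \<Rightarrow> (nat \<times> nat) set" where
  "shadow mu i j = {(a, b). (a, b) \<in> ferrers mu \<and> a \<ge> i \<and> b \<ge> j}"

definition cell_less :: "nat \<times> nat \<Rightarrow> nat \<times> nat \<Rightarrow> bool" where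
  "cell_less c c' \<longleftrightarrow> snd c < snd c' \<or> (snd c = snd c' \<and> fst c < fst c')"

definition cells_sorted :: "(nat \<times> nat) set \<Rightarrow> (nat \<times> nat) list" where
  "cells_sorted L = (THE cs. sorted_wrt cell_less cs \<and> set cs = L)"

text \<open>Delta_L = det (x_r^{p_t} y_r^{q_t})_{1 \<le> r,t \<le> m}, written by the Leibniz formula\<close>
definition Delta :: "(nat \<times> nat) set \<Rightarrow> qpoly" where
  "Delta L = (let cs = cells_sorted L; m = length cs in
     (\<Sum>\<sigma> | \<sigma> permutes {1..m}. const (of_int (sign \<sigma>)) *
        (\<Prod>r\<in>{1..m}. monom (Poly_Mapping.single (X r) (fst (cs ! (\<sigma> r - 1)))
                             + Poly_Mapping.single (Y r) (snd (cs ! (\<sigma> r - 1)))))))"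

text \<open>a filling: a set W of k white cells in the shadow, and a bijection f from {1..n}
  onto the remaining cells (f t = cell containing t)\<close>
definition fillings :: "nat list \<Rightarrow> nat \<Rightarrow> nat \<Rightarrow> nat \<Rightarrow> nat \<Rightarrow> (nat \<Rightarrow> nat \<times> nat) set" where
  "fillings mu i j n k = {f. \<exists>W. W \<subseteq> shadow mu i j \<and> card W = k \<and>
       bij_betw f {1..n} (ferrers mu - W) \<and> (\<forall>t. t \<notin> {1..n} \<longrightarrow> f t = undefined)}"

text \<open>the point of Q^{2n} attached to a filling, as an assignment x_t := alpha_{r_t}, y_t := beta_{c_t}
  (variables outside x_1..x_n, y_1..y_n are set to 0; only polynomials of Q[X_n,Y_n] are evaluated)\<close>
definition point_of :: "(nat \<Rightarrow> rat) \<Rightarrow> (nat \<Rightarrow> rat) \<Rightarrow> nat \<Rightarrow> (nat \<Rightarrow> nat \<times> nat) \<Rightarrow> pvar \<Rightarrow> rat" where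
  "point_of \<alpha> \<beta> n f v = (case v of
      X t \<Rightarrow> if 1 \<le> t \<and> t \<le> n then \<alpha> (fst (f t)) else 0
    | Y t \<Rightarrow> if 1 \<le> t \<and> t \<le> n then \<beta> (snd (f t)) else 0)"

definition rho :: "nat list \<Rightarrow> nat \<Rightarrow> nat \<Rightarrow> nat \<Rightarrow> nat \<Rightarrow> (nat \<Rightarrow> rat) \<Rightarrow> (nat \<Rightarrow> rat) \<Rightarrow> (pvar \<Rightarrow> rat) set" where
  "rho mu i j n k \<alpha> \<beta> = point_of \<alpha> \<beta> n ` fillings mu i j n k"

definition vanishing_ideal :: "nat \<Rightarrow> (pvar \<Rightarrow> rat) set \<Rightarrow> qpoly set" where
  "vanishing_ideal n R = {p. in_QXY n p \<and> (\<forall>pt\<in>R. eval p pt = 0)}"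

definition gr_ideal :: "nat \<Rightarrow> qpoly set \<Rightarrow> qpoly set" where
  "gr_ideal n J = ideal_gen {p. in_QXY n p} (top_form ` J)"

definition shift_mono :: "nat \<Rightarrow> (nat \<times> nat) list \<Rightarrow> mon" where
  "shift_mono n cs = (\<Sum>s<length cs. Poly_Mapping.single (X (n + s + 1)) (fst (cs ! s))
                                    + Poly_Mapping.single (Y (n + s + 1)) (snd (cs ! s)))"

end

theory Submission
  imports Defs "Jordan_Normal_Form.Determinant"
begin



definition dfac :: "mon \<Rightarrow> mon \<Rightarrow> rat" where
  "dfac m u = (\<Prod>v\<in>Poly_Mapping.keys u. (fact (Poly_Mapping.lookup m v + Poly_Mapping.lookup u v) :: rat) / fact (Poly_Mapping.lookup m v))"

definition Dm :: "mon \<Rightarrow> (mon \<Rightarrow> rat) \<Rightarrow> mon \<Rightarrow> rat" where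
  "Dm u F = (\<lambda>m. dfac m u * F (m + u))"

definition Op :: "qpoly \<Rightarrow> (mon \<Rightarrow> rat) \<Rightarrow> mon \<Rightarrow> rat" where
  "Op P F = (\<lambda>m. \<Sum>u\<in>Poly_Mapping.keys P. Poly_Mapping.lookup P u * Dm u F m)"

lemma finite_shift_keys: "finite {m'::mon. m' + u \<in> Poly_Mapping.keys Q}"
proof -
  have "{m'::mon. m' + u \<in> Poly_Mapping.keys Q} = (\<lambda>m'. m' + u) -` Poly_Mapping.keys Q" by auto
  moreover have "inj (\<lambda>m'::mon. m' + u)" by (auto intro: injI)
  ultimately show ?thesis by (simp add: finite_vimageI)
qed

lemma lookup_diff_mono: "Poly_Mapping.lookup (diff_mono u Q) = Dm u (Poly_Mapping.lookup Q)"
proof -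
  have fin: "finite {m'. (\<Prod>v\<in>Poly_Mapping.keys u. (fact (Poly_Mapping.lookup m' v + Poly_Mapping.lookup u v) :: rat) / fact (Poly_Mapping.lookup m' v)) * Poly_Mapping.lookup Q (m' + u) \<noteq> 0}"
    by (rule finite_subset[OF _ finite_shift_keys[of u Q]]) (auto simp: in_keys_iff)
  show ?thesis unfolding diff_mono_def Dm_def dfac_def
    using fin by (simp add: fun_eq_iff)
qed

lemma lookup_const_mult: "Poly_Mapping.lookup (const c * p) m = c * Poly_Mapping.lookup p m"
proof -
  have "const c * p = Poly_Mapping.map ((*) c) p"
    by (simp add: const_def mult_map_scale_conv_mult)
  then show ?thesis by (simp add: Poly_Mapping.map.rep_eq when_def)
qed

lemma lookup_apply_op: "Poly_Mapping.lookup (apply_op P Q) = Op P (Poly_Mapping.lookup Q)"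
  by (simp add: apply_op_def Op_def fun_eq_iff lookup_sum lookup_const_mult lookup_diff_mono)

lemma dfac_superset:
  assumes "Poly_Mapping.keys u \<subseteq> S" "finite S"
  shows "dfac m u = (\<Prod>v\<in>S. (fact (Poly_Mapping.lookup m v + Poly_Mapping.lookup u v) :: rat) / fact (Poly_Mapping.lookup m v))"
  unfolding dfac_def
  by (rule prod.mono_neutral_left[OF assms(2) assms(1)]) (auto simp: in_keys_iff)

lemma dfac_add: "dfac m (a + b) = dfac m a * dfac (m + a) b"
proof -
  let ?S = "Poly_Mapping.keys a \<union> Poly_Mapping.keys b"
  have S: "finite ?S" by simp
  have k: "Poly_Mapping.keys (a + b) \<subseteq> ?S" by (rule keys_add)
  have a: "Poly_Mapping.keys a \<subseteq> ?S" and b: "Poly_Mapping.keys b \<subseteq> ?S" by auto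
  show ?thesis
    unfolding dfac_superset[OF k S] dfac_superset[OF a S, of m] dfac_superset[OF b S, of "m+a"]
    by (auto simp: prod.distrib[symmetric] lookup_add add.assoc intro!: prod.cong)
qed

lemma dfac_zero[simp]: "dfac m 0 = 1"
  by (simp add: dfac_def)

lemma Dm_Dm: "Dm a (Dm b F) = Dm (a + b) F"
  by (simp add: Dm_def fun_eq_iff dfac_add add.assoc)

lemma Dm_zero[simp]: "Dm 0 F = F"
  by (simp add: Dm_def)

lemma Dm_0F[simp]: "Dm u (\<lambda>_. 0) = (\<lambda>_. 0)"
  by (simp add: Dm_def)

lemma Op_superset:
  assumes "Poly_Mapping.keys P \<subseteq> S" "finite S"
  shows "Op P F m = (\<Sum>u\<in>S. Poly_Mapping.lookup P u * Dm u F m)"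
  unfolding Op_def
  by (rule sum.mono_neutral_left[OF assms(2) assms(1)]) (auto simp: in_keys_iff)

lemma Op_add: "Op (P + Q) F m = Op P F m + Op Q F m"
proof -
  let ?S = "Poly_Mapping.keys P \<union> Poly_Mapping.keys Q"
  have S: "finite ?S" by simp
  have a: "Poly_Mapping.keys P \<subseteq> ?S" and b: "Poly_Mapping.keys Q \<subseteq> ?S" by auto
  show ?thesis
    unfolding Op_superset[OF keys_add S] Op_superset[OF a S, of F m] Op_superset[OF b S, of F m]
    by (simp add: lookup_add distrib_right sum.distrib)
qed

lemma Op_zeroP[simp]: "Op 0 F = (\<lambda>_. 0)"
  by (simp add: Op_def fun_eq_iff)

lemma Op_sum: "finite I \<Longrightarrow> Op (\<Sum>i\<in>I. P i) F m = (\<Sum>i\<in>I. Op (P i) F m)"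
  by (induction I rule: finite_induct) (auto simp: Op_add)

lemma Op_0F[simp]: "Op P (\<lambda>_. 0) = (\<lambda>_. 0)"
  by (simp add: Op_def fun_eq_iff)

lemma Op_linF: "finite I \<Longrightarrow> Op P (\<lambda>m. \<Sum>i\<in>I. c i * G i m) m = (\<Sum>i\<in>I. c i * Op P (G i) m)"
  by (simp add: Op_def Dm_def sum_distrib_left sum_distrib_right mult_ac sum.swap[of _ I])

lemma lookup_mult_keys:
  "Poly_Mapping.lookup (f * g) w = (\<Sum>l\<in>Poly_Mapping.keys f. \<Sum>q\<in>Poly_Mapping.keys g. if w = l + q then Poly_Mapping.lookup f l * Poly_Mapping.lookup g q else 0)"
proof -
  have 1: "(\<Sum>q. Poly_Mapping.lookup g q when w = l + q) = (\<Sum>q\<in>Poly_Mapping.keys g. if w = l + q then Poly_Mapping.lookup g q else 0)" for l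
    by (subst Sum_any.expand_superset[of "Poly_Mapping.keys g"]) (auto simp: when_def in_keys_iff)
  have "Poly_Mapping.lookup (f * g) w = (\<Sum>l. Poly_Mapping.lookup f l * (\<Sum>q\<in>Poly_Mapping.keys g. if w = l + q then Poly_Mapping.lookup g q else 0))"
    by (simp add: lookup_mult 1)
  also have "\<dots> = (\<Sum>l\<in>Poly_Mapping.keys f. Poly_Mapping.lookup f l * (\<Sum>q\<in>Poly_Mapping.keys g. if w = l + q then Poly_Mapping.lookup g q else 0))"
    by (subst Sum_any.expand_superset[of "Poly_Mapping.keys f"]) (auto simp: in_keys_iff)
  finally show ?thesis by (simp add: sum_distrib_left if_distrib cong: if_cong)
qed

lemma mult_if0: "(if c then a else (0::rat)) * d = (if c then a * d else 0)" by simp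

lemma Op_mult: "Op (f * g) F = Op f (Op g F)"
proof
  fix m
  let ?K = "(\<lambda>(l, q). l + q) ` (Poly_Mapping.keys f \<times> Poly_Mapping.keys g)"
  have K: "finite ?K" by simp
  have sub: "Poly_Mapping.keys (f * g) \<subseteq> ?K" using keys_mult by fastforce
  have "Op (f * g) F m = (\<Sum>w\<in>?K. Poly_Mapping.lookup (f * g) w * Dm w F m)"
    by (rule Op_superset[OF sub K])
  also have "\<dots> = (\<Sum>w\<in>?K. \<Sum>l\<in>Poly_Mapping.keys f. \<Sum>q\<in>Poly_Mapping.keys g.
        (if w = l + q then Poly_Mapping.lookup f l * Poly_Mapping.lookup g q * Dm w F m else 0))"
    unfolding lookup_mult_keys sum_distrib_right mult_if0 by (rule refl)
  also have "\<dots> = (\<Sum>l\<in>Poly_Mapping.keys f. \<Sum>q\<in>Poly_Mapping.keys g. \<Sum>w\<in>?K.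
        (if w = l + q then Poly_Mapping.lookup f l * Poly_Mapping.lookup g q * Dm w F m else 0))"
    by (subst sum.swap) (rule sum.cong[OF refl], rule sum.swap)
  also have "\<dots> = (\<Sum>l\<in>Poly_Mapping.keys f. \<Sum>q\<in>Poly_Mapping.keys g.
        Poly_Mapping.lookup f l * Poly_Mapping.lookup g q * Dm (l + q) F m)"
  proof (intro sum.cong refl)
    fix l q assume lq: "l \<in> Poly_Mapping.keys f" "q \<in> Poly_Mapping.keys g"
    then have "l + q \<in> ?K" by auto
    then show "(\<Sum>w\<in>?K. (if w = l + q then Poly_Mapping.lookup f l * Poly_Mapping.lookup g q * Dm w F m else 0))
      = Poly_Mapping.lookup f l * Poly_Mapping.lookup g q * Dm (l + q) F m"
      by (subst sum.delta[OF K]) simp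
  qed
  also have "\<dots> = Op f (Op g F) m"
    by (simp add: Op_def Dm_def dfac_add sum_distrib_left mult_ac add.assoc)
  finally show "Op (f * g) F m = Op f (Op g F) m" .
qed

lemma Op_monom: "Op (Defs.monom u) F = Dm u F"
  by (simp add: Op_def Defs.monom_def fun_eq_iff)

lemma Op_Dm_comm: "Op g (Dm u F) = Dm u (Op g F)"
proof -
  have "Op g (Dm u F) = Op (g * Defs.monom u) F" by (simp add: Op_mult Op_monom)
  also have "\<dots> = Op (Defs.monom u * g) F" by (simp add: mult.commute)
  also have "\<dots> = Dm u (Op g F)" by (simp add: Op_mult Op_monom)
  finally show ?thesis .
qed

lemma I_of_ideal:
  assumes G: "\<And>g. g \<in> G \<Longrightarrow> Op g (Poly_Mapping.lookup R) = (\<lambda>_. 0)"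
    and P: "P \<in> ideal_gen S G"
  shows "P \<in> I_of R"
proof -
  obtain F c where F: "finite F" "F \<subseteq> G" and Pe: "P = (\<Sum>g\<in>F. c g * g)"
    using P unfolding ideal_gen_def by blast
  have "apply_op P (diff_mono m R) = 0" for m
  proof (rule poly_mapping_eqI)
    fix x
    have "Poly_Mapping.lookup (apply_op P (diff_mono m R)) x = (\<Sum>g\<in>F. Op (c g * g) (Dm m (Poly_Mapping.lookup R)) x)"
      by (simp add: lookup_apply_op lookup_diff_mono Pe Op_sum F)
    also have "\<dots> = 0"
      using F G by (auto intro!: sum.neutral simp: Op_mult Op_Dm_comm)
    finally show "Poly_Mapping.lookup (apply_op P (diff_mono m R)) x = Poly_Mapping.lookup 0 x" by simp
  qed
  then show ?thesis by (simp add: I_of_def)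
qed




definition Vn :: "nat \<Rightarrow> pvar set" where
  "Vn n = {v. \<exists>t. 1 \<le> t \<and> t \<le> n \<and> (v = X t \<or> v = Y t)}"

lemma in_QXY_iff: "in_QXY n p \<longleftrightarrow> (\<forall>m\<in>Poly_Mapping.keys p. Poly_Mapping.keys m \<subseteq> Vn n)"
  by (auto simp: in_QXY_def Vn_def)

lemma keys_add_mon: "Poly_Mapping.keys ((a::mon) + b) = Poly_Mapping.keys a \<union> Poly_Mapping.keys b"
  by (auto simp: in_keys_iff lookup_add)

lemma in_QXY_add: "in_QXY n p \<Longrightarrow> in_QXY n q \<Longrightarrow> in_QXY n (p + q)"
  unfolding in_QXY_iff using keys_add[of p q] by blast

lemma in_QXY_mult: "in_QXY n p \<Longrightarrow> in_QXY n q \<Longrightarrow> in_QXY n (p * q)"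
  unfolding in_QXY_iff using keys_mult[of p q] by (force simp: keys_add_mon)

lemma in_QXY_zero: "in_QXY n 0"
  by (simp add: in_QXY_iff)

lemma in_QXY_sum: "finite I \<Longrightarrow> (\<And>i. i \<in> I \<Longrightarrow> in_QXY n (f i)) \<Longrightarrow> in_QXY n (\<Sum>i\<in>I. f i)"
  by (induction I rule: finite_induct) (auto intro: in_QXY_add in_QXY_zero)

lemma lookup_top_form: "Poly_Mapping.lookup (top_form p) m = (if mdeg m = totdeg p then Poly_Mapping.lookup p m else 0)"
proof -
  have "finite {m. (if mdeg m = totdeg p then Poly_Mapping.lookup p m else 0) \<noteq> 0}"
    by (rule finite_subset[of _ "Poly_Mapping.keys p"]) (auto simp: in_keys_iff)
  then show ?thesis by (simp add: top_form_def)
qed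

lemma keys_top_form: "Poly_Mapping.keys (top_form p) = {m\<in>Poly_Mapping.keys p. mdeg m = totdeg p}"
  by (auto simp: in_keys_iff lookup_top_form split: if_splits)

lemma in_QXY_top_form: "in_QXY n p \<Longrightarrow> in_QXY n (top_form p)"
  unfolding in_QXY_iff keys_top_form by auto

lemma gr_sub_QXY:
  assumes "P \<in> gr_ideal n J" "\<And>f. f \<in> J \<Longrightarrow> in_QXY n f"
  shows "in_QXY n P"
proof -
  obtain F c where F: "finite F" "F \<subseteq> top_form ` J" "\<forall>g\<in>F. c g \<in> {p. in_QXY n p}" and Pe: "P = (\<Sum>g\<in>F. c g * g)"
    using assms(1) unfolding gr_ideal_def ideal_gen_def by blast
  show ?thesis unfolding Pe
    using F assms(2) by (auto intro!: in_QXY_sum in_QXY_mult in_QXY_top_form)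
qed

lemma mdeg_superset: "Poly_Mapping.keys m \<subseteq> S \<Longrightarrow> finite S \<Longrightarrow> mdeg m = (\<Sum>v\<in>S. Poly_Mapping.lookup m v)"
  unfolding mdeg_def by (rule sum.mono_neutral_left) (auto simp: in_keys_iff)

lemma mdeg_add: "mdeg (a + b) = mdeg a + mdeg b"
proof -
  let ?S = "Poly_Mapping.keys a \<union> Poly_Mapping.keys b"
  have 1: "Poly_Mapping.keys a \<subseteq> ?S" "Poly_Mapping.keys b \<subseteq> ?S" "Poly_Mapping.keys (a+b) \<subseteq> ?S" "finite ?S"
    by (auto simp: keys_add_mon)
  show ?thesis unfolding mdeg_superset[OF 1(1) 1(4)] mdeg_superset[OF 1(2) 1(4)] mdeg_superset[OF 1(3) 1(4)]
    by (simp add: lookup_add sum.distrib)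
qed

lemma mdeg_single[simp]: "mdeg (Poly_Mapping.single v k) = k"
  by (simp add: mdeg_def)

lemma mdeg_zero[simp]: "mdeg 0 = 0"
  by (simp add: mdeg_def)

lemma mdeg_le_totdeg: "u \<in> Poly_Mapping.keys f \<Longrightarrow> mdeg u \<le> totdeg f"
  unfolding totdeg_def by (rule Max_ge) auto

lemma eval_superset: "Poly_Mapping.keys f \<subseteq> S \<Longrightarrow> finite S \<Longrightarrow>
  eval f P = (\<Sum>m\<in>S. Poly_Mapping.lookup f m * (\<Prod>v\<in>Poly_Mapping.keys m. P v ^ Poly_Mapping.lookup m v))"
  unfolding eval_def by (rule sum.mono_neutral_left) (auto simp: in_keys_iff)

lemma eval_cong:
  assumes "in_QXY n f" "\<And>v. v \<in> Vn n \<Longrightarrow> P v = Q v"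
  shows "eval f P = eval f Q"
  unfolding eval_def
proof (intro sum.cong refl arg_cong2[where f="(*)"] prod.cong)
  fix m v assume "m \<in> Poly_Mapping.keys f" "v \<in> Poly_Mapping.keys m"
  then have "v \<in> Vn n" using assms(1) by (auto simp: in_QXY_iff)
  then show "P v ^ Poly_Mapping.lookup m v = Q v ^ Poly_Mapping.lookup m v" using assms(2) by simp
qed

definition E :: "(pvar \<Rightarrow> rat) \<Rightarrow> mon \<Rightarrow> rat" where
  "E P m = (\<Prod>v\<in>Poly_Mapping.keys m. P v ^ Poly_Mapping.lookup m v / fact (Poly_Mapping.lookup m v))"

lemma E_superset: "Poly_Mapping.keys m \<subseteq> S \<Longrightarrow> finite S \<Longrightarrow>
   E P m = (\<Prod>v\<in>S. P v ^ Poly_Mapping.lookup m v / fact (Poly_Mapping.lookup m v))"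
  unfolding E_def by (rule prod.mono_neutral_left) (auto simp: in_keys_iff)

lemma dfac_E: "dfac m u * E P (m + u) = (\<Prod>v\<in>Poly_Mapping.keys u. P v ^ Poly_Mapping.lookup u v) * E P m"
proof -
  let ?S = "Poly_Mapping.keys m \<union> Poly_Mapping.keys u"
  have S: "Poly_Mapping.keys m \<subseteq> ?S" "Poly_Mapping.keys u \<subseteq> ?S" "Poly_Mapping.keys (m+u) \<subseteq> ?S" "finite ?S"
    by (auto simp: keys_add_mon)
  have 3: "(\<Prod>v\<in>Poly_Mapping.keys u. P v ^ Poly_Mapping.lookup u v) = (\<Prod>v\<in>?S. P v ^ Poly_Mapping.lookup u v)"
    by (rule prod.mono_neutral_left) (auto simp: in_keys_iff)
  have pt: "(fact (a + b) :: rat) / fact a * (x ^ (a + b) / fact (a + b)) = x ^ b * (x ^ a / fact a)" for a b and x :: rat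
    by (simp add: power_add field_simps)
  show ?thesis
    unfolding dfac_superset[OF S(2) S(4)] E_superset[OF S(1) S(4)] E_superset[OF S(3) S(4)] 3
    by (simp add: prod.distrib[symmetric] lookup_add pt power_add mult_ac)
qed

lemma Op_E: "Op f (E P) m = eval f P * E P m"
  by (simp add: Op_def Dm_def dfac_E eval_def sum_distrib_left mult_ac)




definition lin :: "pvar \<Rightarrow> rat \<Rightarrow> qpoly" where
  "lin v c = Defs.monom (Poly_Mapping.single v 1) - const c"

lemma single1_ne0: "Poly_Mapping.single v (1::nat) \<noteq> 0"
  by (metis lookup_single_eq lookup_zero one_neq_zero)

lemma lookup_lin: "Poly_Mapping.lookup (lin v c) u = (if u = Poly_Mapping.single v 1 then 1 else if u = 0 then - c else 0)"
  using single1_ne0[of v] by (auto simp: lin_def Defs.monom_def const_def lookup_minus lookup_single when_def)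

lemma keys_lin: "Poly_Mapping.keys (lin v c) \<subseteq> {Poly_Mapping.single v 1, 0}"
  by (auto simp: in_keys_iff lookup_lin split: if_splits)

lemma Op_lin: "Op (lin v c) F m = Dm (Poly_Mapping.single v 1) F m - c * F m"
  using single1_ne0[of v] by (simp add: Op_superset[OF keys_lin] lookup_lin)

lemma eval_lin: "eval (lin v c) P = P v - c"
  using single1_ne0[of v] by (simp add: eval_superset[OF keys_lin] lookup_lin)

lemma Op_scal: "Op P (\<lambda>m. a * G m) m = a * Op P G m"
  by (simp add: Op_def Dm_def sum_distrib_left mult_ac)

fun opL :: "(pvar \<times> rat) list \<Rightarrow> (mon \<Rightarrow> rat) \<Rightarrow> mon \<Rightarrow> rat" where
  "opL [] F = F"
| "opL ((v, c) # L) F = Op (lin v c) (opL L F)"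

definition muL :: "(pvar \<times> rat) list \<Rightarrow> mon" where
  "muL L = sum_list (map (\<lambda>(v, c). Poly_Mapping.single v 1) L)"

lemma muL_Nil[simp]: "muL [] = 0" and muL_Cons[simp]: "muL ((v,c) # L) = Poly_Mapping.single v 1 + muL L"
  by (simp_all add: muL_def)

lemma opL_E: "opL L (E P) m = prod_list (map (\<lambda>(v, c). P v - c) L) * E P m"
proof (induction L arbitrary: m)
  case Nil then show ?case by simp
next
  case (Cons a L)
  obtain v c where a: "a = (v, c)" by force
  have "opL L (E P) = (\<lambda>m. prod_list (map (\<lambda>(v, c). P v - c) L) * E P m)"
    using Cons by auto
  then show ?case
    by (simp add: a Op_scal Op_E eval_lin)
qed

lemma opL_lin: "finite I \<Longrightarrow> opL L (\<lambda>m. \<Sum>i\<in>I. a i * G i m) m = (\<Sum>i\<in>I. a i * opL L (G i) m)"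
proof (induction L arbitrary: m)
  case Nil then show ?case by simp
next
  case (Cons x L)
  obtain v c where x: "x = (v, c)" by force
  have "opL L (\<lambda>m. \<Sum>i\<in>I. a i * G i m) = (\<lambda>m. \<Sum>i\<in>I. a i * opL L (G i) m)"
    using Cons by auto
  then show ?case using Cons.prems by (simp add: x Op_linF)
qed

lemma opL_deg:
  assumes F: "\<And>m. mdeg m < K \<Longrightarrow> F m = 0"
  shows "(\<forall>m. mdeg m + length L < K \<longrightarrow> opL L F m = 0) \<and>
         (\<forall>m. mdeg m + length L = K \<longrightarrow> opL L F m = Dm (muL L) F m)"
proof (induction L)
  case Nil then show ?case using F by simp
next
  case (Cons x L)
  obtain v c where x: "x = (v, c)" by force
  let ?G = "opL L F"
  have op: "opL (x # L) F m = dfac m (Poly_Mapping.single v 1) * ?G (m + Poly_Mapping.single v 1) - c * ?G m" for m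
    by (simp add: x Op_lin Dm_def)
  have dm: "mdeg (m + Poly_Mapping.single v 1) = mdeg m + 1" for m by (simp add: mdeg_add)
  show ?case
  proof (intro conjI allI impI)
    fix m assume "mdeg m + length (x # L) < K"
    then show "opL (x # L) F m = 0"
      using Cons.IH[THEN conjunct1, rule_format, of "m + Poly_Mapping.single v 1"]
        Cons.IH[THEN conjunct1, rule_format, of m] dm[of m] by (simp add: op)
  next
    fix m assume h: "mdeg m + length (x # L) = K"
    then have "opL (x # L) F m = dfac m (Poly_Mapping.single v 1) * Dm (muL L) F (m + Poly_Mapping.single v 1)"
      using Cons.IH[THEN conjunct2, rule_format, of "m + Poly_Mapping.single v 1"]
        Cons.IH[THEN conjunct1, rule_format, of m] dm[of m] by (simp add: op)
    also have "\<dots> = Dm (Poly_Mapping.single v 1) (Dm (muL L) F) m" by (simp add: Dm_def)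
    also have "\<dots> = Dm (muL (x # L)) F m" by (simp add: Dm_Dm x)
    finally show "opL (x # L) F m = Dm (muL (x # L)) F m" .
  qed
qed

lemma mdeg_muL: "mdeg (muL L) = length L"
  by (induction L) (auto simp: mdeg_add)




lemma dd_identity:
  fixes x :: "nat \<Rightarrow> rat"
  assumes inj: "inj_on x {0..p}" and ap: "a \<le> p"
  shows "(\<Sum>i\<in>{0..p}. x i ^ a / (\<Prod>j\<in>{0..p}-{i}. (x i - x j))) = (if a = p then 1 else 0)"
proof -
  define D where "D i = (\<Prod>j\<in>{0..p}-{i}. (x i - x j))" for i
  define B where "B i = (\<Prod>j\<in>{0..p}-{i}. [:- x j, 1:])" for i
  define Q where "Q = (\<Sum>i\<in>{0..p}. smult (x i ^ a / D i) (B i))"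
  have Dnz: "D i \<noteq> 0" if "i \<le> p" for i
    unfolding D_def using inj that by (auto simp: inj_on_def)
  have Bnz: "\<And>j. [:- x j, 1:] \<noteq> (0 :: rat poly)" by simp
  have degB: "degree (B i) = p" and lcB: "lead_coeff (B i) = 1" if "i \<le> p" for i
  proof -
    have "degree (B i) = (\<Sum>j\<in>{0..p}-{i}. degree [:- x j, 1::rat:])"
      unfolding B_def by (rule degree_prod_sum_eq) simp
    also have "\<dots> = card ({0..p}-{i})" by simp
    also have "\<dots> = p" using that by simp
    finally show "degree (B i) = p" .
    show "lead_coeff (B i) = 1" unfolding B_def lead_coeff_prod by simp
  qed
  have coeffB: "coeff (B i) p = 1" if "i \<le> p" for i
    using degB[OF that] lcB[OF that] by simp
  have polyB: "poly (B i) (x k) = (if i = k then D i else 0)" if "i \<le> p" "k \<le> p" for i k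
  proof (cases "i = k")
    case True then show ?thesis by (simp add: B_def D_def poly_prod)
  next
    case False
    then have "k \<in> {0..p}-{i}" using that by auto
    then have "(\<Prod>ka\<in>{0..p} - {i}. poly [:- x ka, 1:] (x k)) = 0"
      by (intro prod_zero) (auto intro!: bexI[of _ k])
    then show ?thesis using False unfolding B_def poly_prod by simp
  qed
  have polyQ: "poly Q (x k) = x k ^ a" if "k \<le> p" for k
  proof -
    have "poly Q (x k) = (\<Sum>i\<in>{0..p}. x i ^ a / D i * (if i = k then D i else 0))"
      unfolding Q_def poly_sum by (intro sum.cong refl) (simp add: polyB that)
    also have "\<dots> = x k ^ a / D k * D k"
      using that by (simp add: if_distrib[of "\<lambda>z. _ * z"] sum.delta cong: if_cong)
    also have "\<dots> = x k ^ a" using Dnz[OF that] by simp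
    finally show ?thesis .
  qed
  define R where "R = Q - Polynomial.monom 1 a"
  have degQ: "degree Q \<le> p"
    unfolding Q_def by (rule degree_sum_le) (auto intro: order.trans[OF degree_smult_le] simp: degB)
  have degR: "degree R \<le> p"
    unfolding R_def using degQ ap by (intro degree_diff_le) (auto simp: degree_monom_eq)
  have R0: "R = 0"
  proof (rule ccontr)
    assume "R \<noteq> 0"
    then have fin: "finite {z. poly R z = 0}" by (rule poly_roots_finite)
    have "x ` {0..p} \<subseteq> {z. poly R z = 0}"
      using polyQ by (auto simp: R_def poly_monom)
    then have "card (x ` {0..p}) \<le> card {z. poly R z = 0}" using fin by (rule card_mono[rotated])
    also have "\<dots> \<le> degree R" using \<open>R \<noteq> 0\<close> by (rule card_poly_roots_bound)
    finally have "Suc p \<le> p" using card_image[OF inj] degR by simp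
    then show False by simp
  qed
  have "coeff Q p = (\<Sum>i\<in>{0..p}. x i ^ a / D i)"
    unfolding Q_def coeff_sum by (intro sum.cong refl) (simp add: coeffB)
  moreover have "coeff Q p = (if a = p then 1 else 0)"
    using R0 unfolding R_def by (simp add: coeff_monom)
  ultimately show ?thesis by (simp add: D_def)
qed




definition gsh :: "nat \<Rightarrow> nat \<Rightarrow> nat" where
  "gsh N x = (if x < N then Suc x else if x = N then 0 else x)"
definition gshi :: "nat \<Rightarrow> nat \<Rightarrow> nat" where
  "gshi N x = (if 1 \<le> x \<and> x \<le> N then x - 1 else if x = 0 then N else x)"

lemma gsh_gshi[simp]: "gsh N (gshi N x) = x" and gshi_gsh[simp]: "gshi N (gsh N x) = x"
  by (auto simp: gsh_def gshi_def)

lemma gsh_perm: "gsh N permutes {0..N}"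
proof (rule bij_imp_permutes)
  show "bij_betw (gsh N) {0..N} {0..N}"
    by (rule bij_betw_byWitness[of _ "gshi N"]) (auto simp: gsh_def gshi_def)
qed (auto simp: gsh_def)

lemma gshi_perm: "gshi N permutes {0..N}"
proof (rule bij_imp_permutes)
  show "bij_betw (gshi N) {0..N} {0..N}"
    by (rule bij_betw_byWitness[of _ "gsh N"]) (auto simp: gsh_def gshi_def)
qed (auto simp: gshi_def)

lemma sign_conj_gsh: assumes "p permutes S" "finite S"
  shows "sign (gsh N \<circ> p \<circ> gshi N) = sign p"
proof -
  have pg: "permutation (gsh N)" "permutation (gshi N)" "permutation p"
    using gsh_perm gshi_perm assms by (auto intro: permutes_imp_permutation)
  have "sign (gsh N \<circ> p \<circ> gshi N) = sign (gsh N) * sign p * sign (gshi N)"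
    using pg by (simp add: sign_compose permutation_compose)
  moreover have "sign (gsh N) * sign (gshi N) = sign (gsh N \<circ> gshi N)"
    using pg by (simp add: sign_compose)
  moreover have "gsh N \<circ> gshi N = id" by (simp add: fun_eq_iff)
  ultimately show ?thesis by (metis mult.commute mult.left_commute mult_1_right sign_id)
qed

lemma leibniz_conv:
  fixes M :: "nat \<Rightarrow> nat \<Rightarrow> 'a::comm_ring_1"
  shows "(\<Sum>\<sigma> | \<sigma> permutes {1..N}. of_int (sign \<sigma>) * (\<Prod>r\<in>{1..N}. M r (\<sigma> r)))
       = det (mat N N (\<lambda>(i,j). M (Suc i) (Suc j)))"
proof -
  have "det (mat N N (\<lambda>(i,j). M (Suc i) (Suc j))) =
     (\<Sum>p\<in>{p. p permutes {0..<N}}. signof p * (\<Prod>i = 0..<N. M (Suc i) (Suc (p i))))"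
    unfolding det_def' [of _ N, OF mat_carrier]
    by (intro sum.cong refl arg_cong2[where f="(*)"] prod.cong) (auto simp: permutes_in_image)
  also have "\<dots> = (\<Sum>\<sigma> | \<sigma> permutes {1..N}. of_int (sign \<sigma>) * (\<Prod>r\<in>{1..N}. M r (\<sigma> r)))"
  proof (rule sum.reindex_bij_witness[where j = "\<lambda>p. gsh N \<circ> p \<circ> gshi N" and i = "\<lambda>\<sigma>. gshi N \<circ> \<sigma> \<circ> gsh N"])
    fix p assume "p \<in> {p. p permutes {0..<N}}"
    then have p: "p permutes {0..<N}" by simp
    show "gshi N \<circ> (gsh N \<circ> p \<circ> gshi N) \<circ> gsh N = p" by (simp add: fun_eq_iff)
    have pN: "p N = N" "\<And>x. x > N \<Longrightarrow> p x = x" using p by (auto intro: permutes_not_in)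
    have "gsh N \<circ> p \<circ> gshi N permutes {0..N}"
      using p gsh_perm gshi_perm by (auto intro!: permutes_compose intro: permutes_subset)
    then show "gsh N \<circ> p \<circ> gshi N \<in> {\<sigma>. \<sigma> permutes {1..N}}"
      by (simp, rule permutes_superset) (use pN in \<open>auto simp: gsh_def gshi_def\<close>)
    have pr: "(\<Prod>r\<in>{1..N}. M r ((gsh N \<circ> p \<circ> gshi N) r)) = (\<Prod>i = 0..<N. M (Suc i) (Suc (p i)))"
    proof -
      have eq: "{1..N} = Suc ` {0..<N}" by (simp add: image_Suc_atLeastLessThan atLeastLessThanSuc_atLeastAtMost)
      then have "(\<Prod>r\<in>{1..N}. M r ((gsh N \<circ> p \<circ> gshi N) r)) = (\<Prod>i\<in>{0..<N}. M (Suc i) ((gsh N \<circ> p \<circ> gshi N) (Suc i)))"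
        unfolding eq by (subst prod.reindex) (simp_all add: inj_on_def)
      also have "\<dots> = (\<Prod>i = 0..<N. M (Suc i) (Suc (p i)))"
        using p by (intro prod.cong refl) (auto simp: gsh_def gshi_def permutes_in_image)
      finally show ?thesis .
    qed
    show "of_int (sign (gsh N \<circ> p \<circ> gshi N)) * (\<Prod>r\<in>{1..N}. M r ((gsh N \<circ> p \<circ> gshi N) r)) =
          signof p * (\<Prod>i = 0..<N. M (Suc i) (Suc (p i)))"
      using sign_conj_gsh[OF p] pr by simp
  next
    fix \<sigma> assume "\<sigma> \<in> {\<sigma>. \<sigma> permutes {1..N}}"
    then have s: "\<sigma> permutes {1..N}" by simp
    show "gsh N \<circ> (gshi N \<circ> \<sigma> \<circ> gsh N) \<circ> gshi N = \<sigma>" by (simp add: fun_eq_iff)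
    have s0: "\<sigma> 0 = 0" "\<And>x. x > N \<Longrightarrow> \<sigma> x = x" using s by (auto intro: permutes_not_in)
    have "gshi N \<circ> \<sigma> \<circ> gsh N permutes {0..N}"
      using s gsh_perm gshi_perm by (auto intro!: permutes_compose intro: permutes_subset)
    then show "gshi N \<circ> \<sigma> \<circ> gsh N \<in> {p. p permutes {0..<N}}"
      by (simp, rule permutes_superset) (use s0 in \<open>auto simp: gsh_def gshi_def\<close>)
  qed
  finally show ?thesis by simp
qed




lemma cells_sorted_prop:
  assumes fin: "finite L"
  shows "sorted_wrt cell_less (cells_sorted L) \<and> set (cells_sorted L) = L"
proof -
  define B where "B = Suc (Max (insert 0 (fst ` L)))"
  define \<kappa> where "\<kappa> c = snd c * B + fst c" for c :: "nat \<times> nat"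
  have fstB: "fst c < B" if "c \<in> L" for c
    using that fin unfolding B_def by (simp add: le_imp_less_Suc)
  have key: "cell_less c c' \<longleftrightarrow> \<kappa> c < \<kappa> c'" if "c \<in> L" "c' \<in> L" for c c'
  proof -
    obtain p q p' q' where c: "c = (p, q)" "c' = (p', q')" by force
    have pB: "p < B" "p' < B" using fstB that c by auto
    have l1: "q * B + p < q' * B + p'" if "q < q'"
    proof -
      have "q * B + p < q * B + B" using pB by simp
      also have "\<dots> = Suc q * B" by simp
      also have "\<dots> \<le> q' * B" using that by (intro mult_right_mono) auto
      finally show ?thesis by simp
    qed
    show ?thesis
    proof
      assume "cell_less c c'" then show "\<kappa> c < \<kappa> c'"
        using l1 by (auto simp: cell_less_def \<kappa>_def c)
    next
      assume h: "\<kappa> c < \<kappa> c'"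
      have "\<not> q' < q" using l1[of] h pB
      proof -
        { assume "q' < q"
          then have "q' * B + p' < q * B + p"
          proof -
            have "q' * B + p' < q' * B + B" using pB by simp
            also have "\<dots> = Suc q' * B" by simp
            also have "\<dots> \<le> q * B" using \<open>q' < q\<close> by (intro mult_right_mono) auto
            finally show ?thesis by simp
          qed
          then have False using h by (simp add: \<kappa>_def c) }
        then show ?thesis by blast
      qed
      then show "cell_less c c'" using h by (auto simp: cell_less_def \<kappa>_def c)
    qed
  qed
  have inj: "inj_on \<kappa> L"
  proof (rule inj_onI)
    fix c c' assume "c \<in> L" "c' \<in> L" "\<kappa> c = \<kappa> c'"
    then show "c = c'"
      using key[of c c'] key[of c' c] by (auto simp: cell_less_def prod_eq_iff)
  qed
  define xs where "xs = map (inv_into L \<kappa>) (sorted_list_of_set (\<kappa> ` L))"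
  have setxs: "set xs = L" using fin inj by (simp add: xs_def)
  have sxs: "sorted_wrt cell_less xs"
    unfolding xs_def sorted_wrt_map
    by (rule sorted_wrt_mono_rel[OF _ sorted_list_of_set.strict_sorted_key_list_of_set])
       (use fin inj key in \<open>auto simp: f_inv_into_f\<close>)
  have uniq: "ys = xs" if "sorted_wrt cell_less ys" "set ys = L" for ys
  proof -
    have h1: "sorted_wrt (<) (map \<kappa> ys)"
      unfolding sorted_wrt_map by (rule sorted_wrt_mono_rel[OF _ that(1)]) (use key that(2) in auto)
    have h2: "sorted_wrt (<) (sorted_list_of_set (\<kappa> ` L))"
      by (rule sorted_list_of_set.strict_sorted_key_list_of_set)
    have h3: "set (map \<kappa> ys) = set (sorted_list_of_set (\<kappa> ` L))" using fin that(2) by simp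
    have "map \<kappa> ys = sorted_list_of_set (\<kappa> ` L)" by (rule strict_sorted_equal[OF h2 h1 h3])
    then have "map (inv_into L \<kappa>) (map \<kappa> ys) = xs" by (simp add: xs_def)
    moreover have "map (inv_into L \<kappa>) (map \<kappa> ys) = ys"
      using inj that(2) by (auto intro!: map_idI simp: inv_into_f_f)
    ultimately show ?thesis by simp
  qed
  have "\<exists>!cs. sorted_wrt cell_less cs \<and> set cs = L"
    using sxs setxs uniq by blast
  then show ?thesis unfolding cells_sorted_def by (rule theI')
qed




locale Sett =
  fixes mu :: "nat list" and n k :: nat and \<alpha> \<beta> :: "nat \<Rightarrow> rat"
  assumes part: "is_partition mu (n + k)"
    and inj\<alpha>: "inj_on \<alpha> {0..<length mu}"
    and inj\<beta>: "inj_on \<beta> {0..<mu ! 0}"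
begin

abbreviation "N \<equiv> n + k"
definition "CS = cells_sorted (ferrers mu)"
definition "rw t = fst (CS ! t)"
definition "cl t = snd (CS ! t)"

lemma ferrers_Sigma: "ferrers mu = Sigma {0..<length mu} (\<lambda>a. {0..<mu ! a})"
  by (auto simp: ferrers_def)

lemma finite_ferrers: "finite (ferrers mu)"
  by (simp add: ferrers_Sigma)

lemma card_ferrers: "card (ferrers mu) = N"
proof -
  have "card (ferrers mu) = (\<Sum>a = 0..<length mu. mu ! a)"
    by (simp add: ferrers_Sigma card_SigmaI)
  also have "\<dots> = sum_list mu" by (simp add: sum_list_sum_nth)
  finally show ?thesis using part by (simp add: is_partition_def)
qed

lemma CS_sorted: "sorted_wrt cell_less CS" and set_CS: "set CS = ferrers mu"
  using cells_sorted_prop[OF finite_ferrers] by (simp_all add: CS_def)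

lemma distinct_CS: "distinct CS"
proof -
  have "sorted_wrt cell_less xs \<Longrightarrow> distinct xs" for xs
    by (induction xs) (auto simp: cell_less_def)
  then show ?thesis using CS_sorted by blast
qed

lemma length_CS: "length CS = N"
  using distinct_card[OF distinct_CS] set_CS card_ferrers by simp

lemma CS_in: "t < N \<Longrightarrow> CS ! t \<in> ferrers mu"
  using set_CS length_CS nth_mem by metis

lemma CS_inj: "i < N \<Longrightarrow> j < N \<Longrightarrow> CS ! i = CS ! j \<longleftrightarrow> i = j"
  using distinct_CS length_CS by (simp add: nth_eq_iff_index_eq)

lemma ferrers_down: "(p, q) \<in> ferrers mu \<Longrightarrow> p' \<le> p \<Longrightarrow> q' \<le> q \<Longrightarrow> (p', q') \<in> ferrers mu"
proof -
  assume pq: "(p, q) \<in> ferrers mu" and le: "p' \<le> p" "q' \<le> q"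
  have s: "sorted_wrt (\<ge>) mu" using part by (simp add: is_partition_def)
  have "mu ! p \<le> mu ! p'"
  proof (cases "p' = p")
    case False
    then have "p' < p" "p < length mu" using le pq by (auto simp: ferrers_def)
    from sorted_wrt_nth_less[OF s this] show ?thesis by simp
  qed simp
  then show ?thesis using pq le by (auto simp: ferrers_def)
qed

lemma ferrers_bounds: "(p, q) \<in> ferrers mu \<Longrightarrow> p < length mu \<and> q < mu ! 0"
  using ferrers_down[of p q 0 q] by (auto simp: ferrers_def)

lemma rw_bound: "t < N \<Longrightarrow> rw t < length mu" and cl_bound: "t < N \<Longrightarrow> cl t < mu ! 0"
  using CS_in[of t] ferrers_bounds[of "rw t" "cl t"] by (simp_all add: rw_def cl_def)

lemma cell_eq: "i < N \<Longrightarrow> j < N \<Longrightarrow> (rw i = rw j \<and> cl i = cl j) \<longleftrightarrow> i = j"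
  using CS_inj by (auto simp: rw_def cl_def prod_eq_iff)

definition "ea m r = Poly_Mapping.lookup m (X r)"
definition "eb m r = Poly_Mapping.lookup m (Y r)"

lemma Vn_eq: "Vn N = X ` {1..N} \<union> Y ` {1..N}"
  by (auto simp: Vn_def)

lemma mdeg_Vn: "Poly_Mapping.keys m \<subseteq> Vn N \<Longrightarrow> mdeg m = (\<Sum>r\<in>{1..N}. ea m r + eb m r)"
proof -
  assume k: "Poly_Mapping.keys m \<subseteq> Vn N"
  have "mdeg m = (\<Sum>v\<in>X ` {1..N} \<union> Y ` {1..N}. Poly_Mapping.lookup m v)"
    using mdeg_superset[OF k] by (simp add: Vn_eq)
  also have "\<dots> = (\<Sum>v\<in>X ` {1..N}. Poly_Mapping.lookup m v) + (\<Sum>v\<in>Y ` {1..N}. Poly_Mapping.lookup m v)"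
    by (rule sum.union_disjoint) auto
  also have "\<dots> = (\<Sum>r\<in>{1..N}. ea m r + eb m r)"
    by (simp add: sum.reindex inj_on_def sum.distrib ea_def eb_def)
  finally show ?thesis .
qed

lemma E_Vn: "Poly_Mapping.keys m \<subseteq> Vn N \<Longrightarrow>
  E P m = (\<Prod>r\<in>{1..N}. P (X r) ^ ea m r / fact (ea m r) * (P (Y r) ^ eb m r / fact (eb m r)))"
proof -
  assume k: "Poly_Mapping.keys m \<subseteq> Vn N"
  have "E P m = (\<Prod>v\<in>X ` {1..N} \<union> Y ` {1..N}. P v ^ Poly_Mapping.lookup m v / fact (Poly_Mapping.lookup m v))"
    using E_superset[OF k] by (simp add: Vn_eq)
  also have "\<dots> = (\<Prod>v\<in>X ` {1..N}. P v ^ Poly_Mapping.lookup m v / fact (Poly_Mapping.lookup m v)) *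
      (\<Prod>v\<in>Y ` {1..N}. P v ^ Poly_Mapping.lookup m v / fact (Poly_Mapping.lookup m v))"
    by (rule prod.union_disjoint) auto
  also have "\<dots> = (\<Prod>r\<in>{1..N}. P (X r) ^ ea m r / fact (ea m r) * (P (Y r) ^ eb m r / fact (eb m r)))"
    by (simp add: prod.reindex inj_on_def ea_def eb_def prod.distrib[symmetric])
  finally show ?thesis .
qed

definition Psig :: "(nat \<Rightarrow> nat) \<Rightarrow> pvar \<Rightarrow> rat" where
  "Psig \<sigma> v = (case v of X r \<Rightarrow> if 1 \<le> r \<and> r \<le> N then \<alpha> (rw (\<sigma> r - 1)) else 0
                        | Y r \<Rightarrow> if 1 \<le> r \<and> r \<le> N then \<beta> (cl (\<sigma> r - 1)) else 0)"

lemma E_notVn: "\<not> Poly_Mapping.keys m \<subseteq> Vn N \<Longrightarrow> E (Psig \<sigma>) m = 0"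
proof -
  assume "\<not> Poly_Mapping.keys m \<subseteq> Vn N"
  then obtain v where v: "v \<in> Poly_Mapping.keys m" "v \<notin> Vn N" by blast
  then have "Psig \<sigma> v = 0" by (cases v) (auto simp: Psig_def Vn_def)
  moreover have "Poly_Mapping.lookup m v \<noteq> 0" using v by (simp add: in_keys_iff)
  ultimately have "Psig \<sigma> v ^ Poly_Mapping.lookup m v / fact (Poly_Mapping.lookup m v) = 0" by simp
  then show ?thesis unfolding E_def using v(1) by (intro prod_zero) auto
qed

definition Phi :: "mon \<Rightarrow> rat" where
  "Phi m = (\<Sum>\<sigma> | \<sigma> permutes {1..N}. of_int (sign \<sigma>) * E (Psig \<sigma>) m)"

definition msig :: "(nat \<Rightarrow> nat) \<Rightarrow> mon" where
  "msig \<sigma> = (\<Sum>r\<in>{1..N}. Poly_Mapping.single (X r) (rw (\<sigma> r - 1)) + Poly_Mapping.single (Y r) (cl (\<sigma> r - 1)))"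

lemma prod_monom: "finite I \<Longrightarrow> (\<Prod>i\<in>I. Defs.monom (f i)) = Defs.monom (\<Sum>i\<in>I. f i)"
  by (induction I rule: finite_induct) (auto simp: Defs.monom_def mult_single)

lemma lookup_Delta: "Poly_Mapping.lookup (Delta (ferrers mu)) m =
   (\<Sum>\<sigma> | \<sigma> permutes {1..N}. of_int (sign \<sigma>) * (if m = msig \<sigma> then 1 else 0))"
  unfolding Delta_def Let_def CS_def[symmetric] length_CS lookup_sum lookup_const_mult prod_monom[OF finite_atLeastAtMost]
  unfolding Defs.monom_def lookup_single msig_def rw_def cl_def
  by (intro sum.cong refl) (auto simp: when_def)

lemma lookup_msig_X: "Poly_Mapping.lookup (msig \<sigma>) (X r) = (if 1 \<le> r \<and> r \<le> N then rw (\<sigma> r - 1) else 0)"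
  by (simp add: msig_def lookup_sum lookup_add lookup_single when_def sum.delta)

lemma lookup_msig_Y: "Poly_Mapping.lookup (msig \<sigma>) (Y r) = (if 1 \<le> r \<and> r \<le> N then cl (\<sigma> r - 1) else 0)"
  by (simp add: msig_def lookup_sum lookup_add lookup_single when_def sum.delta)

lemma keys_msig: "Poly_Mapping.keys (msig \<sigma>) \<subseteq> Vn N"
proof
  fix v assume "v \<in> Poly_Mapping.keys (msig \<sigma>)"
  then have "Poly_Mapping.lookup (msig \<sigma>) v \<noteq> 0" by (simp add: in_keys_iff)
  then show "v \<in> Vn N" by (cases v) (auto simp: lookup_msig_X lookup_msig_Y Vn_def split: if_splits)
qed

lemma msig_eq: "Poly_Mapping.keys m \<subseteq> Vn N \<Longrightarrow>
   m = msig \<sigma> \<longleftrightarrow> (\<forall>r\<in>{1..N}. ea m r = rw (\<sigma> r - 1) \<and> eb m r = cl (\<sigma> r - 1))"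
proof
  assume "m = msig \<sigma>" then show "\<forall>r\<in>{1..N}. ea m r = rw (\<sigma> r - 1) \<and> eb m r = cl (\<sigma> r - 1)"
    by (simp add: ea_def eb_def lookup_msig_X lookup_msig_Y)
next
  assume k: "Poly_Mapping.keys m \<subseteq> Vn N" and h: "\<forall>r\<in>{1..N}. ea m r = rw (\<sigma> r - 1) \<and> eb m r = cl (\<sigma> r - 1)"
  show "m = msig \<sigma>"
  proof (rule poly_mapping_eqI)
    fix v
    show "Poly_Mapping.lookup m v = Poly_Mapping.lookup (msig \<sigma>) v"
    proof (cases "v \<in> Vn N")
      case True then show ?thesis using h
        by (auto simp: Vn_def ea_def eb_def lookup_msig_X lookup_msig_Y)
    next
      case False
      then have "v \<notin> Poly_Mapping.keys m" "v \<notin> Poly_Mapping.keys (msig \<sigma>)" using k keys_msig by blast+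
      then show ?thesis by (simp add: in_keys_iff)
    qed
  qed
qed

lemma reindex_sig_sum: "\<sigma> permutes {1..N} \<Longrightarrow> (\<Sum>r\<in>{1..N}. h (\<sigma> r - 1)) = (\<Sum>t<N. h t)"
  and reindex_sig_prod: "\<sigma> permutes {1..N} \<Longrightarrow> (\<Prod>r\<in>{1..N}. g (\<sigma> r - 1)) = (\<Prod>t<N. g t)"
proof -
  assume s: "\<sigma> permutes {1..N}"
  have b1: "bij_betw \<sigma> {1..N} {1..N}" using s by (rule permutes_imp_bij)
  have b2: "bij_betw (\<lambda>r. r - 1) {1..N} {..<N}"
    by (rule bij_betw_byWitness[of _ Suc]) auto
  have b: "bij_betw (\<lambda>r. \<sigma> r - 1) {1..N} {..<N}"
    using bij_betw_trans[OF b1 b2] by (simp add: o_def)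
  show "(\<Sum>r\<in>{1..N}. h (\<sigma> r - 1)) = (\<Sum>t<N. h t)" using sum.reindex_bij_betw[OF b] .
  show "(\<Prod>r\<in>{1..N}. g (\<sigma> r - 1)) = (\<Prod>t<N. g t)" using prod.reindex_bij_betw[OF b] .
qed

definition "N0 = (\<Sum>t<N. rw t + cl t)"

lemma mdeg_msig: "\<sigma> permutes {1..N} \<Longrightarrow> mdeg (msig \<sigma>) = N0"
  using mdeg_Vn[OF keys_msig, of \<sigma>] reindex_sig_sum[of \<sigma> "\<lambda>t. rw t + cl t"]
  by (simp add: ea_def eb_def lookup_msig_X lookup_msig_Y N0_def)

lemma Delta_deg: "Poly_Mapping.lookup (Delta (ferrers mu)) m \<noteq> 0 \<Longrightarrow> mdeg m = N0"
proof -
  assume "Poly_Mapping.lookup (Delta (ferrers mu)) m \<noteq> 0"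
  then obtain \<sigma> where "\<sigma> permutes {1..N}" "m = msig \<sigma>"
    unfolding lookup_Delta by (auto elim!: sum.not_neutral_contains_not_neutral split: if_splits)
  then show ?thesis using mdeg_msig by simp
qed

end



context Sett begin

lemma Phi_notVn: "\<not> Poly_Mapping.keys m \<subseteq> Vn N \<Longrightarrow> Phi m = 0"
  by (simp add: Phi_def E_notVn)

definition "Kf m = (\<Prod>r\<in>{1..N}. 1 / (fact (ea m r) * fact (eb m r)) :: rat)"
definition "Am m = mat N N (\<lambda>(i,j). \<alpha> (rw j) ^ ea m (Suc i) * \<beta> (cl j) ^ eb m (Suc i))"

lemma Phi_Vn: assumes k: "Poly_Mapping.keys m \<subseteq> Vn N" shows "Phi m = Kf m * det (Am m)"
proof -
  define M where "M r t = \<alpha> (rw (t - 1)) ^ ea m r * \<beta> (cl (t - 1)) ^ eb m r" for r t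
  have E: "E (Psig \<sigma>) m = Kf m * (\<Prod>r\<in>{1..N}. M r (\<sigma> r))" for \<sigma>
    unfolding E_Vn[OF k] Kf_def M_def prod.distrib[symmetric]
    by (intro prod.cong refl) (simp add: Psig_def)
  have "Phi m = Kf m * (\<Sum>\<sigma> | \<sigma> permutes {1..N}. of_int (sign \<sigma>) * (\<Prod>r\<in>{1..N}. M r (\<sigma> r)))"
    by (simp add: Phi_def E sum_distrib_left mult_ac)
  also have "\<dots> = Kf m * det (mat N N (\<lambda>(i,j). M (Suc i) (Suc j)))"
    by (simp only: leibniz_conv)
  also have "\<dots> = Kf m * det (Am m)"
    by (simp add: Am_def M_def)
  finally show ?thesis .
qed

definition "wa p' p = 1 / (\<Prod>x\<in>{0..p}-{p'}. \<alpha> p' - \<alpha> x)"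
definition "wb q' q = 1 / (\<Prod>x\<in>{0..q}-{q'}. \<beta> q' - \<beta> x)"
definition "Wa a p = (\<Sum>p'\<in>{0..p}. \<alpha> p' ^ a * wa p' p)"
definition "Wb b q = (\<Sum>q'\<in>{0..q}. \<beta> q' ^ b * wb q' q)"

definition "Tm = mat N N (\<lambda>(l,j). if rw l \<le> rw j \<and> cl l \<le> cl j then wa (rw l) (rw j) * wb (cl l) (cl j) else 0)"

lemma Wa_eq: "p < length mu \<Longrightarrow> a \<le> p \<Longrightarrow> Wa a p = (if a = p then 1 else 0)"
proof -
  assume "p < length mu" "a \<le> p"
  then have inj: "inj_on \<alpha> {0..p}" using inj\<alpha> by (auto intro: inj_on_subset)
  show ?thesis using dd_identity[OF inj \<open>a \<le> p\<close>] by (simp add: Wa_def wa_def)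
qed

lemma Wb_eq: "q < mu ! 0 \<Longrightarrow> b \<le> q \<Longrightarrow> Wb b q = (if b = q then 1 else 0)"
proof -
  assume "q < mu ! 0" "b \<le> q"
  then have inj: "inj_on \<beta> {0..q}" using inj\<beta> by (auto intro: inj_on_subset)
  show ?thesis using dd_identity[OF inj \<open>b \<le> q\<close>] by (simp add: Wb_def wb_def)
qed

lemma wa_nz: "p < length mu \<Longrightarrow> wa p p \<noteq> 0"
  using inj\<alpha> by (auto simp: wa_def inj_on_def)

lemma wb_nz: "q < mu ! 0 \<Longrightarrow> wb q q \<noteq> 0"
  using inj\<beta> by (auto simp: wb_def inj_on_def)

lemma det_Tm: "det Tm \<noteq> 0"
proof -
  have ut: "upper_triangular Tm"
    unfolding upper_triangular_def
  proof (intro allI impI)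
    fix l j assume lj: "l < dim_row Tm" "j < l"
    then have "l < N" by (simp add: Tm_def)
    then have "cell_less (CS ! j) (CS ! l)"
      using sorted_wrt_nth_less[OF CS_sorted lj(2)] length_CS by simp
    then have "\<not> (rw l \<le> rw j \<and> cl l \<le> cl j)" by (auto simp: cell_less_def rw_def cl_def)
    then show "Tm $$ (l, j) = 0" using lj \<open>l < N\<close> by (auto simp: Tm_def)
  qed
  have "det Tm = prod_list (diag_mat Tm)"
    by (rule det_upper_triangular[OF ut, of N]) (simp add: Tm_def)
  also have "\<dots> \<noteq> 0"
    using wa_nz wb_nz rw_bound cl_bound by (auto simp: diag_mat_def Tm_def prod_list_zero_iff)
  finally show ?thesis .
qed

lemma sum_CS: "(\<Sum>l<N. h (CS ! l)) = (\<Sum>c\<in>ferrers mu. h c)"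
proof -
  have inj: "inj_on (\<lambda>l. CS ! l) {..<N}" using CS_inj by (auto simp: inj_on_def)
  have im: "(\<lambda>l. CS ! l) ` {..<N} = ferrers mu"
    by (auto simp: set_CS[symmetric] length_CS in_set_conv_nth image_iff) (metis lessThan_iff)
  show ?thesis using sum.reindex[OF inj, of h] im by simp
qed

lemma AT_entry:
  assumes ij: "i < N" "j < N"
  shows "(Am m * Tm) $$ (i, j) = Wa (ea m (Suc i)) (rw j) * Wb (eb m (Suc i)) (cl j)"
proof -
  let ?a = "ea m (Suc i)" and ?b = "eb m (Suc i)" and ?p = "rw j" and ?q = "cl j"
  define h where "h c = (if fst c \<le> ?p \<and> snd c \<le> ?q then (\<alpha> (fst c) ^ ?a * wa (fst c) ?p) * (\<beta> (snd c) ^ ?b * wb (snd c) ?q) else 0)" for c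
  have "(Am m * Tm) $$ (i, j) = (\<Sum>l\<in>{0..<N}. Am m $$ (i, l) * Tm $$ (l, j))"
    using ij by (simp add: Am_def Tm_def scalar_prod_def)
  also have "\<dots> = (\<Sum>l<N. h (CS ! l))"
    using ij by (intro sum.cong) (auto simp: Am_def Tm_def h_def rw_def cl_def)
  also have "\<dots> = (\<Sum>c\<in>ferrers mu. h c)" by (rule sum_CS)
  also have "\<dots> = (\<Sum>c\<in>{0..?p} \<times> {0..?q}. h c)"
  proof (rule sum.mono_neutral_right[OF finite_ferrers])
    have "(?p, ?q) \<in> ferrers mu" using CS_in[OF ij(2)] by (simp add: rw_def cl_def)
    then show "{0..?p} \<times> {0..?q} \<subseteq> ferrers mu" using ferrers_down by auto
    show "\<forall>c\<in>ferrers mu - {0..?p} \<times> {0..?q}. h c = 0" by (auto simp: h_def)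
  qed
  also have "\<dots> = Wa ?a ?p * Wb ?b ?q"
    unfolding Wa_def Wb_def sum_product sum.cartesian_product
    by (intro sum.cong refl) (auto simp: h_def)
  finally show ?thesis .
qed

end



lemma prod_ind: "finite S \<Longrightarrow> (\<Prod>r\<in>S. if P r then (1::'a::comm_semiring_1) else 0) = (if \<forall>r\<in>S. P r then 1 else 0)"
  by (induction S rule: finite_induct) auto

context Sett begin

lemma mdeg_Vn': "Poly_Mapping.keys m \<subseteq> Vn N \<Longrightarrow> mdeg m = (\<Sum>i<N. ea m (Suc i) + eb m (Suc i))"
proof -
  assume k: "Poly_Mapping.keys m \<subseteq> Vn N"
  have eq: "{1..N} = Suc ` {..<N}" by (auto simp: image_iff) (metis Suc_pred' lessThan_iff less_Suc_eq_le le_less_Suc_eq not_less_eq_eq zero_less_Suc order.trans[of 0] le_zero_eq less_one not_less)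
  show ?thesis unfolding mdeg_Vn[OF k] eq by (subst sum.reindex) (auto simp: inj_on_def)
qed

lemma N0_perm: "p permutes {0..<N} \<Longrightarrow> N0 = (\<Sum>i<N. rw (p i) + cl (p i))"
proof -
  assume "p permutes {0..<N}"
  then have b: "bij_betw p {..<N} {..<N}" using permutes_imp_bij by (metis atLeast0LessThan)
  show ?thesis unfolding N0_def using sum.reindex_bij_betw[OF b, of "\<lambda>t. rw t + cl t"] by simp
qed

definition "Wm m i j = Wa (ea m (Suc i)) (rw j) * Wb (eb m (Suc i)) (cl j)"

lemma prodW:
  assumes p: "p permutes {0..<N}" and k: "Poly_Mapping.keys m \<subseteq> Vn N" and d: "mdeg m \<le> N0"
  shows "(\<Prod>i\<in>{0..<N}. Wm m i (p i)) = (if \<forall>i<N. ea m (Suc i) = rw (p i) \<and> eb m (Suc i) = cl (p i) then 1 else 0)"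
proof -
  have pi: "i < N \<Longrightarrow> p i < N" for i using p by (auto simp: permutes_in_image)
  show ?thesis
  proof (cases "\<forall>i<N. ea m (Suc i) = rw (p i) \<and> eb m (Suc i) = cl (p i)")
    case True
    then have "\<And>i. i \<in> {0..<N} \<Longrightarrow> Wm m i (p i) = 1"
      using Wa_eq rw_bound Wb_eq cl_bound pi by (simp add: Wm_def)
    then show ?thesis using True by simp
  next
    case False
    have z: "(\<Prod>i\<in>{0..<N}. Wm m i (p i)) = 0"
    proof (rule ccontr)
      assume nz: "(\<Prod>i\<in>{0..<N}. Wm m i (p i)) \<noteq> 0"
      have ge: "rw (p i) \<le> ea m (Suc i) \<and> cl (p i) \<le> eb m (Suc i)" if i: "i < N" for i
      proof -
        have "Wm m i (p i) \<noteq> 0" using nz i by auto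
        then have "Wa (ea m (Suc i)) (rw (p i)) \<noteq> 0" "Wb (eb m (Suc i)) (cl (p i)) \<noteq> 0" by (auto simp: Wm_def)
        then show ?thesis using Wa_eq[OF rw_bound[OF pi[OF i]]] Wb_eq[OF cl_bound[OF pi[OF i]]]
          by (metis not_le order.strict_implies_order less_irrefl)
      qed
      from False obtain i0 where i0: "i0 < N" "\<not> (ea m (Suc i0) = rw (p i0) \<and> eb m (Suc i0) = cl (p i0))" by blast
      have "(\<Sum>i<N. rw (p i) + cl (p i)) < (\<Sum>i<N. ea m (Suc i) + eb m (Suc i))"
      proof (rule sum_strict_mono_ex1)
        show "\<forall>x\<in>{..<N}. rw (p x) + cl (p x) \<le> ea m (Suc x) + eb m (Suc x)" using ge by (simp add: add_mono)
        have "rw (p i0) + cl (p i0) < ea m (Suc i0) + eb m (Suc i0)"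
          using ge[OF i0(1)] i0(2) by (cases "ea m (Suc i0) = rw (p i0)") auto
        then show "\<exists>a\<in>{..<N}. rw (p a) + cl (p a) < ea m (Suc a) + eb m (Suc a)" using i0(1) by blast
      qed simp
      then show False using d N0_perm[OF p] mdeg_Vn'[OF k] by simp
    qed
    show ?thesis using False z by (simp only: if_not_P if_False)
  qed
qed

lemma detAT:
  assumes k: "Poly_Mapping.keys m \<subseteq> Vn N" and d: "mdeg m \<le> N0"
  shows "det (Am m * Tm) = (\<Sum>p | p permutes {0..<N}. signof p * (if \<forall>i<N. ea m (Suc i) = rw (p i) \<and> eb m (Suc i) = cl (p i) then 1 else 0))"
proof -
  have c: "Am m * Tm \<in> carrier_mat N N" by (rule mult_carrier_mat[of _ N N]) (simp_all only: Am_def Tm_def mat_carrier)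
  show ?thesis
    unfolding det_def'[OF c]
  proof (intro sum.cong refl)
    fix p assume "p \<in> {p. p permutes {0..<N}}"
    then have p: "p permutes {0..<N}" by simp
    have "(\<Prod>i = 0..<N. (Am m * Tm) $$ (i, p i)) = (\<Prod>i\<in>{0..<N}. Wm m i (p i))"
      using p by (intro prod.cong refl) (auto simp: AT_entry Wm_def permutes_in_image)
    then show "signof p * (\<Prod>i = 0..<N. (Am m * Tm) $$ (i, p i)) =
      signof p * (if \<forall>i<N. ea m (Suc i) = rw (p i) \<and> eb m (Suc i) = cl (p i) then 1 else 0)"
      using prodW[OF p k d] by simp
  qed
qed

lemma Delta_det:
  assumes k: "Poly_Mapping.keys m \<subseteq> Vn N"
  shows "Poly_Mapping.lookup (Delta (ferrers mu)) m =
    (\<Sum>p | p permutes {0..<N}. signof p * (if \<forall>i<N. ea m (Suc i) = rw (p i) \<and> eb m (Suc i) = cl (p i) then 1 else 0))"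
proof -
  define M where "M r t = (if ea m r = rw (t - 1) \<and> eb m r = cl (t - 1) then 1 else (0::rat))" for r t
  have "Poly_Mapping.lookup (Delta (ferrers mu)) m =
     (\<Sum>\<sigma> | \<sigma> permutes {1..N}. of_int (sign \<sigma>) * (\<Prod>r\<in>{1..N}. M r (\<sigma> r)))"
    unfolding lookup_Delta msig_eq[OF k] M_def by (simp add: prod_ind)
  also have "\<dots> = det (mat N N (\<lambda>(i,j). M (Suc i) (Suc j)))" by (rule leibniz_conv)
  also have "\<dots> = (\<Sum>p | p permutes {0..<N}. signof p * (\<Prod>i = 0..<N. M (Suc i) (Suc (p i))))"
    unfolding det_def'[OF mat_carrier]
    by (intro sum.cong refl arg_cong2[where f="(*)"] prod.cong) (auto simp: permutes_in_image)
  also have "\<dots> = (\<Sum>p | p permutes {0..<N}. signof p * (if \<forall>i<N. ea m (Suc i) = rw (p i) \<and> eb m (Suc i) = cl (p i) then 1 else 0))"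
    by (intro sum.cong refl) (simp add: M_def prod_ind atLeast0LessThan)
  finally show ?thesis .
qed

end



context Sett begin

definition "K0 = (\<Prod>t<N. 1 / (fact (rw t) * fact (cl t)) :: rat)"

lemma K0_nz: "K0 \<noteq> 0"
  by (simp add: K0_def)

lemma Phi_main:
  "\<exists>c0. c0 \<noteq> 0 \<and> (\<forall>m. mdeg m < N0 \<longrightarrow> Phi m = 0) \<and>
        (\<forall>m. mdeg m = N0 \<longrightarrow> Phi m = c0 * Poly_Mapping.lookup (Delta (ferrers mu)) m)"
proof (intro exI conjI allI impI)
  let ?c0 = "K0 / det Tm"
  show "?c0 \<noteq> 0" using K0_nz det_Tm by simp
  have detA: "det (Am m) = det (Am m * Tm) / det Tm" for m
  proof -
    have "det (Am m * Tm) = det (Am m) * det Tm"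
      by (rule det_mult[of _ N]) (simp_all only: Am_def Tm_def mat_carrier)
    then show ?thesis using det_Tm by simp
  qed
  fix m
  {
    assume d: "mdeg m < N0"
    show "Phi m = 0"
    proof (cases "Poly_Mapping.keys m \<subseteq> Vn N")
      case False then show ?thesis by (rule Phi_notVn)
    next
      case True
      have "det (Am m * Tm) = 0"
      proof -
        have "det (Am m * Tm) = (\<Sum>p | p permutes {0..<N}. signof p * (if \<forall>i<N. ea m (Suc i) = rw (p i) \<and> eb m (Suc i) = cl (p i) then 1 else 0))"
          using detAT[OF True] d by simp
        also have "\<dots> = 0"
        proof (intro sum.neutral ballI)
          fix p assume "p \<in> {p. p permutes {0..<N}}"
          then have p: "p permutes {0..<N}" by simp
          have "\<not> (\<forall>i<N. ea m (Suc i) = rw (p i) \<and> eb m (Suc i) = cl (p i))"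
          proof
            assume "\<forall>i<N. ea m (Suc i) = rw (p i) \<and> eb m (Suc i) = cl (p i)"
            then have "mdeg m = N0" using mdeg_Vn'[OF True] N0_perm[OF p] by simp
            then show False using d by simp
          qed
          then show "signof p * (if \<forall>i<N. ea m (Suc i) = rw (p i) \<and> eb m (Suc i) = cl (p i) then 1 else 0) = 0"
            by (simp only: if_not_P if_False mult_zero_right)
        qed
        finally show ?thesis .
      qed
      then show ?thesis using Phi_Vn[OF True] detA by simp
    qed
  }
  {
    assume d: "mdeg m = N0"
    show "Phi m = ?c0 * Poly_Mapping.lookup (Delta (ferrers mu)) m"
    proof (cases "Poly_Mapping.keys m \<subseteq> Vn N")
      case False
      have "Poly_Mapping.lookup (Delta (ferrers mu)) m = 0"
        unfolding lookup_Delta using False keys_msig by (intro sum.neutral) auto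
      then show ?thesis using Phi_notVn[OF False] by simp
    next
      case True
      have AT: "det (Am m * Tm) = Poly_Mapping.lookup (Delta (ferrers mu)) m"
        using detAT[OF True] Delta_det[OF True] d by simp
      show ?thesis
      proof (cases "Poly_Mapping.lookup (Delta (ferrers mu)) m = 0")
        case True
        then show ?thesis using Phi_Vn[OF \<open>Poly_Mapping.keys m \<subseteq> Vn N\<close>] detA AT by simp
      next
        case False
        then obtain \<sigma> where s: "\<sigma> permutes {1..N}" "m = msig \<sigma>"
          unfolding lookup_Delta by (auto elim!: sum.not_neutral_contains_not_neutral split: if_splits)
        have "Kf m = (\<Prod>r\<in>{1..N}. 1 / (fact (rw (\<sigma> r - 1)) * fact (cl (\<sigma> r - 1))))"
          unfolding Kf_def using s(2) by (simp add: ea_def eb_def lookup_msig_X lookup_msig_Y)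
        also have "\<dots> = K0" unfolding K0_def by (rule reindex_sig_prod[OF s(1)])
        finally have "Kf m = K0" .
        then show ?thesis using Phi_Vn[OF \<open>Poly_Mapping.keys m \<subseteq> Vn N\<close>] detA AT by simp
      qed
    qed
  }
qed

end



lemma muL_append: "muL (xs @ ys) = muL xs + muL ys"
  by (simp add: muL_def)

lemma muL_concat: "muL (concat xss) = sum_list (map muL xss)"
  by (induction xss) (auto simp: muL_append)

lemma muL_rep: "muL (map (\<lambda>p. (v, c p)) [0..<a]) = Poly_Mapping.single v a"
  by (induction a) (auto simp: muL_append single_add[symmetric])

definition Lcs :: "nat \<Rightarrow> (nat \<Rightarrow> rat) \<Rightarrow> (nat \<Rightarrow> rat) \<Rightarrow> (nat \<times> nat) list \<Rightarrow> (pvar \<times> rat) list" where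
  "Lcs n \<alpha> \<beta> cs = concat (map (\<lambda>s. map (\<lambda>p. (X (n + s + 1), \<alpha> p)) [0..<fst (cs ! s)]
                                   @ map (\<lambda>q. (Y (n + s + 1), \<beta> q)) [0..<snd (cs ! s)]) [0..<length cs])"

lemma muL_Lcs: "muL (Lcs n \<alpha> \<beta> cs) = shift_mono n cs"
proof -
  have "muL (Lcs n \<alpha> \<beta> cs) = sum_list (map (\<lambda>s. Poly_Mapping.single (X (n + s + 1)) (fst (cs ! s))
          + Poly_Mapping.single (Y (n + s + 1)) (snd (cs ! s))) [0..<length cs])"
    unfolding Lcs_def muL_concat map_map o_def muL_append muL_rep by simp
  also have "\<dots> = shift_mono n cs"
    unfolding shift_mono_def interv_sum_list_conv_sum_set_nat by (simp add: atLeast0LessThan)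
  finally show ?thesis .
qed

context Sett begin

lemma sig_bij: "\<sigma> permutes {1..N} \<Longrightarrow> bij_betw (\<lambda>r. \<sigma> r - 1) {1..N} {..<N}"
proof -
  assume s: "\<sigma> permutes {1..N}"
  have b1: "bij_betw \<sigma> {1..N} {1..N}" using s by (rule permutes_imp_bij)
  have b2: "bij_betw (\<lambda>r. r - 1) {1..N} {..<N}"
    by (rule bij_betw_byWitness[of _ Suc]) auto
  show ?thesis using bij_betw_trans[OF b1 b2] by (simp add: o_def)
qed

lemma CS_image: "(\<lambda>l. CS ! l) ` {..<N} = ferrers mu"
  by (auto simp: set_CS[symmetric] length_CS in_set_conv_nth image_iff) (metis lessThan_iff)

lemma CS_bij: "bij_betw (\<lambda>l. CS ! l) {..<N} (ferrers mu)"
  unfolding bij_betw_def using CS_image CS_inj by (auto simp: inj_on_def)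

lemma filling_exists:
  assumes s: "\<sigma> permutes {1..N}" and cs: "length cs = k" "set cs \<subseteq> shadow mu i j"
    and ge: "\<And>s. s < k \<Longrightarrow> fst (cs ! s) \<le> rw (\<sigma> (n + s + 1) - 1) \<and> snd (cs ! s) \<le> cl (\<sigma> (n + s + 1) - 1)"
  shows "\<exists>ff\<in>fillings mu i j n k. \<forall>t. 1 \<le> t \<and> t \<le> n \<longrightarrow> ff t = CS ! (\<sigma> t - 1)"
proof -
  define g where "g r = CS ! (\<sigma> r - 1)" for r
  have gb: "bij_betw g {1..N} (ferrers mu)"
    unfolding g_def using bij_betw_trans[OF sig_bij[OF s] CS_bij] by (simp add: o_def)
  then have ginj: "inj_on g {1..N}" and gim: "g ` {1..N} = ferrers mu" by (auto simp: bij_betw_def)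
  define W where "W = g ` {n+1..N}"
  define ff where "ff t = (if t \<in> {1..n} then g t else undefined)" for t
  have split: "{1..N} = {1..n} \<union> {n+1..N}" by auto
  have W_sub: "W \<subseteq> shadow mu i j"
  proof
    fix c assume "c \<in> W"
    then obtain r where r: "r \<in> {n+1..N}" "c = g r" by (auto simp: W_def)
    define s where "s = r - n - 1"
    have s': "s < k" "r = n + s + 1" using r(1) by (auto simp: s_def)
    have "cs ! s \<in> shadow mu i j" using cs s' by auto
    then have "i \<le> fst (cs ! s)" "j \<le> snd (cs ! s)" by (auto simp: shadow_def)
    moreover have "c \<in> ferrers mu" using r gim by auto
    ultimately show "c \<in> shadow mu i j" using ge[OF s'(1)] s' r
      by (auto simp: shadow_def g_def rw_def cl_def)
  qed
  have cardW: "card W = k"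
    unfolding W_def by (subst card_image) (auto intro: inj_on_subset[OF ginj])
  have ffb: "bij_betw ff {1..n} (ferrers mu - W)"
  proof -
    have "bij_betw g {1..n} (g ` {1..n})" by (rule inj_on_imp_bij_betw) (auto intro: inj_on_subset[OF ginj])
    moreover have "g ` {1..n} = ferrers mu - W"
    proof -
      have "g ` {1..n} \<inter> g ` {n+1..N} = {}"
        using inj_on_image_Int[OF ginj, of "{1..n}" "{n+1..N}"] by auto
      moreover have "g ` {1..n} \<union> g ` {n+1..N} = ferrers mu" using gim split by (simp add: image_Un)
      ultimately show ?thesis by (auto simp: W_def)
    qed
    moreover have "bij_betw ff {1..n} (g ` {1..n}) = bij_betw g {1..n} (g ` {1..n})"
      by (rule bij_betw_cong) (simp add: ff_def)
    ultimately show ?thesis by simp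
  qed
  have "ff \<in> fillings mu i j n k"
    unfolding fillings_def using W_sub cardW ffb by (auto simp: ff_def)
  moreover have "\<forall>t. 1 \<le> t \<and> t \<le> n \<longrightarrow> ff t = CS ! (\<sigma> t - 1)" by (simp add: ff_def g_def)
  ultimately show ?thesis by blast
qed

end



context Sett begin

definition "csig L \<sigma> = prod_list (map (\<lambda>(v, c). Psig \<sigma> v - c) L)"

lemma Phi_fun: "Phi = (\<lambda>m. \<Sum>\<sigma>\<in>{\<sigma>. \<sigma> permutes {1..N}}. of_int (sign \<sigma>) * E (Psig \<sigma>) m)"
  by (simp add: fun_eq_iff Phi_def)

lemma finite_perms: "finite {\<sigma>. \<sigma> permutes {1..N}}"
  by (rule finite_permutations) simp

lemma H_expand: "opL L Phi = (\<lambda>m. \<Sum>\<sigma>\<in>{\<sigma>. \<sigma> permutes {1..N}}. (of_int (sign \<sigma>) * csig L \<sigma>) * E (Psig \<sigma>) m)"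
proof
  fix m
  have "opL L Phi m = (\<Sum>\<sigma>\<in>{\<sigma>. \<sigma> permutes {1..N}}. of_int (sign \<sigma>) * opL L (E (Psig \<sigma>)) m)"
    unfolding Phi_fun by (rule opL_lin[OF finite_perms])
  then show "opL L Phi m = (\<Sum>\<sigma>\<in>{\<sigma>. \<sigma> permutes {1..N}}. (of_int (sign \<sigma>) * csig L \<sigma>) * E (Psig \<sigma>) m)"
    by (simp add: opL_E csig_def mult_ac)
qed

lemma csig_ge:
  assumes s: "\<sigma> permutes {1..N}" and c: "csig (Lcs n \<alpha> \<beta> cs) \<sigma> \<noteq> 0" and len: "length cs = k"
    and sk: "s < k"
  shows "fst (cs ! s) \<le> rw (\<sigma> (n + s + 1) - 1) \<and> snd (cs ! s) \<le> cl (\<sigma> (n + s + 1) - 1)"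
proof -
  have nz: "Psig \<sigma> v \<noteq> c" if "(v, c) \<in> set (Lcs n \<alpha> \<beta> cs)" for v c
  proof
    assume "Psig \<sigma> v = c"
    then have "0 \<in> (\<lambda>(v, c). Psig \<sigma> v - c) ` set (Lcs n \<alpha> \<beta> cs)" using that by force
    then show False using c by (simp add: csig_def prod_list_zero_iff)
  qed
  have r: "1 \<le> n + s + 1 \<and> n + s + 1 \<le> N" using sk by simp
  show ?thesis
  proof (rule conjI; rule ccontr)
    assume h: "\<not> fst (cs ! s) \<le> rw (\<sigma> (n + s + 1) - 1)"
    let ?p = "rw (\<sigma> (n + s + 1) - 1)"
    have "(X (n + s + 1), \<alpha> ?p) \<in> set (Lcs n \<alpha> \<beta> cs)"
      unfolding Lcs_def using h sk len by (auto intro!: bexI[of _ s])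
    moreover have "Psig \<sigma> (X (n + s + 1)) = \<alpha> ?p" using r by (simp add: Psig_def)
    ultimately show False using nz by blast
  next
    assume h: "\<not> snd (cs ! s) \<le> cl (\<sigma> (n + s + 1) - 1)"
    let ?q = "cl (\<sigma> (n + s + 1) - 1)"
    have "(Y (n + s + 1), \<beta> ?q) \<in> set (Lcs n \<alpha> \<beta> cs)"
      unfolding Lcs_def using h sk len by (auto intro!: bexI[of _ s])
    moreover have "Psig \<sigma> (Y (n + s + 1)) = \<beta> ?q" using r by (simp add: Psig_def)
    ultimately show False using nz by blast
  qed
qed

lemma Op_H_zero:
  assumes f: "f \<in> vanishing_ideal n (rho mu i j n k \<alpha> \<beta>)" and cs: "length cs = k" "set cs \<subseteq> shadow mu i j"
  shows "Op f (opL (Lcs n \<alpha> \<beta> cs) Phi) m = 0"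
proof -
  let ?L = "Lcs n \<alpha> \<beta> cs"
  have "Op f (opL ?L Phi) m = (\<Sum>\<sigma>\<in>{\<sigma>. \<sigma> permutes {1..N}}. (of_int (sign \<sigma>) * csig ?L \<sigma>) * Op f (E (Psig \<sigma>)) m)"
    unfolding H_expand by (rule Op_linF[OF finite_perms])
  also have "\<dots> = 0"
  proof (intro sum.neutral ballI)
    fix \<sigma> assume "\<sigma> \<in> {\<sigma>. \<sigma> permutes {1..N}}"
    then have s: "\<sigma> permutes {1..N}" by simp
    show "(of_int (sign \<sigma>) * csig ?L \<sigma>) * Op f (E (Psig \<sigma>)) m = 0"
    proof (cases "csig ?L \<sigma> = 0")
      case False
      obtain ff where ff: "ff \<in> fillings mu i j n k" "\<forall>t. 1 \<le> t \<and> t \<le> n \<longrightarrow> ff t = CS ! (\<sigma> t - 1)"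
        using filling_exists[OF s cs] csig_ge[OF s False cs(1)] by blast
      have q: "in_QXY n f" using f by (simp add: vanishing_ideal_def)
      have "eval f (Psig \<sigma>) = eval f (point_of \<alpha> \<beta> n ff)"
      proof (rule eval_cong[OF q])
        fix v assume "v \<in> Vn n"
        then show "Psig \<sigma> v = point_of \<alpha> \<beta> n ff v"
          using ff(2) by (auto simp: Vn_def Psig_def point_of_def rw_def cl_def)
      qed
      also have "\<dots> = 0"
        using f ff(1) by (auto simp: vanishing_ideal_def rho_def)
      finally show ?thesis by (simp add: Op_E)
    qed simp
  qed
  finally show ?thesis .
qed

lemma top_kill:
  assumes f: "f \<in> vanishing_ideal n (rho mu i j n k \<alpha> \<beta>)" and cs: "length cs = k" "set cs \<subseteq> shadow mu i j"
  shows "Op (top_form f) (Poly_Mapping.lookup (diff_mono (shift_mono n cs) (Delta (ferrers mu)))) = (\<lambda>_. 0)"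
proof
  fix m'
  let ?L = "Lcs n \<alpha> \<beta> cs"
  let ?u0 = "shift_mono n cs"
  let ?D = "Poly_Mapping.lookup (Delta (ferrers mu))"
  let ?R = "Dm ?u0 ?D"
  let ?g = "top_form f"
  let ?d = "totdeg f"
  let ?e = "length ?L"
  let ?H = "opL ?L Phi"
  obtain c0 where c0: "c0 \<noteq> 0" "\<And>m. mdeg m < N0 \<Longrightarrow> Phi m = 0"
      "\<And>m. mdeg m = N0 \<Longrightarrow> Phi m = c0 * ?D m"
    using Phi_main by blast
  have u0: "muL ?L = ?u0" by (rule muL_Lcs)
  have e: "mdeg ?u0 = ?e" using mdeg_muL[of ?L] u0 by simp
  note Hdeg = opL_deg[of N0 Phi ?L, OF c0(2)]
  have lookR: "Poly_Mapping.lookup (diff_mono ?u0 (Delta (ferrers mu))) = ?R" by (rule lookup_diff_mono)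
  have Rdeg: "?R x = 0" if "mdeg x + ?e \<noteq> N0" for x
  proof -
    have "?D (x + ?u0) = 0" using Delta_deg[of "x + ?u0"] that by (auto simp: mdeg_add e)
    then show ?thesis by (simp add: Dm_def)
  qed
  have keys_g: "Poly_Mapping.keys ?g \<subseteq> Poly_Mapping.keys f" by (auto simp: keys_top_form)
  have Opg: "Op ?g ?R m' = (\<Sum>u\<in>Poly_Mapping.keys f. Poly_Mapping.lookup ?g u * Dm u ?R m')"
    by (rule Op_superset[OF keys_g]) simp
  show "Op ?g (Poly_Mapping.lookup (diff_mono ?u0 (Delta (ferrers mu)))) m' = 0"
    unfolding lookR
  proof (cases "mdeg m' + ?d + ?e = N0")
    case False
    have "Poly_Mapping.lookup ?g u * Dm u ?R m' = 0" if "u \<in> Poly_Mapping.keys f" for u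
    proof (cases "mdeg u = ?d")
      case True
      then have "?R (m' + u) = 0" using Rdeg[of "m' + u"] False by (simp add: mdeg_add)
      then show ?thesis by (simp add: Dm_def)
    qed (simp add: lookup_top_form)
    then show "Op ?g ?R m' = 0" unfolding Opg by (intro sum.neutral) auto
  next
    case True
    have tm: "Poly_Mapping.lookup f u * Dm u ?H m' = c0 * (Poly_Mapping.lookup ?g u * Dm u ?R m')"
      if u: "u \<in> Poly_Mapping.keys f" for u
    proof (cases "mdeg u = ?d")
      case True
      with \<open>mdeg m' + ?d + ?e = N0\<close> have dd: "mdeg (m' + u) + ?e = N0" by (simp add: mdeg_add)
      have "?H (m' + u) = Dm (muL ?L) Phi (m' + u)" using Hdeg dd by blast
      also have "\<dots> = dfac (m' + u) ?u0 * Phi (m' + u + ?u0)" by (simp add: u0 Dm_def)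
      also have "\<dots> = dfac (m' + u) ?u0 * (c0 * ?D (m' + u + ?u0))"
        using c0(3)[of "m' + u + ?u0"] dd by (simp add: mdeg_add e)
      also have "\<dots> = c0 * ?R (m' + u)" by (simp add: Dm_def)
      finally show ?thesis using True by (simp add: Dm_def lookup_top_form)
    next
      case False
      then have "mdeg u < ?d" using mdeg_le_totdeg[OF u] by simp
      with \<open>mdeg m' + ?d + ?e = N0\<close> have dd: "mdeg (m' + u) + ?e < N0" by (simp add: mdeg_add)
      then have "?H (m' + u) = 0" using Hdeg by blast
      then show ?thesis using False by (simp add: Dm_def lookup_top_form)
    qed
    have "0 = Op f ?H m'" using Op_H_zero[OF f cs] by simp
    also have "\<dots> = (\<Sum>u\<in>Poly_Mapping.keys f. Poly_Mapping.lookup f u * Dm u ?H m')" by (simp add: Op_def)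
    also have "\<dots> = c0 * Op ?g ?R m'" unfolding Opg sum_distrib_left by (intro sum.cong refl tm)
    finally show "Op ?g ?R m' = 0" using c0(1) by simp
  qed
qed

end




theorem mainTheorem5:
  fixes mu :: "nat list" and n k i j :: nat and \<alpha> \<beta> :: "nat \<Rightarrow> rat"
  assumes "is_partition mu (n + k)"
    and "(i, j) \<in> ferrers mu"
    and "inj_on \<alpha> {0..<length mu}"
    and "inj_on \<beta> {0..<mu ! 0}"
  shows "gr_ideal n (vanishing_ideal n (rho mu i j n k \<alpha> \<beta>)) \<subseteq>
    {P. in_QXY n P \<and>
        (\<forall>cs. length cs = k \<and> set cs \<subseteq> shadow mu i j \<and> sorted_wrt cell_less cs \<longrightarrow>
              P \<in> I_of (diff_mono (shift_mono n cs) (Delta (ferrers mu))))}"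
proof
  interpret Sett mu n k \<alpha> \<beta> using assms(1,3,4) by unfold_locales
  fix P assume P: "P \<in> gr_ideal n (vanishing_ideal n (rho mu i j n k \<alpha> \<beta>))"
  have "in_QXY n P"
    by (rule gr_sub_QXY[OF P]) (simp add: vanishing_ideal_def)
  moreover have "P \<in> I_of (diff_mono (shift_mono n cs) (Delta (ferrers mu)))"
    if cs: "length cs = k" "set cs \<subseteq> shadow mu i j" for cs
  proof (rule I_of_ideal)
    show "P \<in> ideal_gen {p. in_QXY n p} (top_form ` vanishing_ideal n (rho mu i j n k \<alpha> \<beta>))"
      using P by (simp add: gr_ideal_def)
  next
    fix g assume "g \<in> top_form ` vanishing_ideal n (rho mu i j n k \<alpha> \<beta>)"
    then obtain f where f: "f \<in> vanishing_ideal n (rho mu i j n k \<alpha> \<beta>)" "g = top_form f" by blast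
    show "Op g (Poly_Mapping.lookup (diff_mono (shift_mono n cs) (Delta (ferrers mu)))) = (\<lambda>_. 0)"
      unfolding f(2) by (rule top_kill[OF f(1) cs])
  qed
  ultimately show "P \<in> {P. in_QXY n P \<and>
        (\<forall>cs. length cs = k \<and> set cs \<subseteq> shadow mu i j \<and> sorted_wrt cell_less cs \<longrightarrow>
              P \<in> I_of (diff_mono (shift_mono n cs) (Delta (ferrers mu))))}" by blast
qed



end
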